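(* Let $a,b$ be positive integers, $d=\gcd(a,b)$, and suppose $a/d$ and $b/d$ are odd. Let $\alpha,\beta,\alpha',\beta'\in\mathbb{N}_0$ satisfy $d=\alpha a-\beta b$ and $-d=\alpha'a-\beta'b$, with $\alpha+\beta$ least possible and $\alpha'+\beta'$ least possible among such solutions. Then both $\alpha+\beta$ and $\alpha'+\beta'$ are odd, i.e. $E_{(-b,a)}^{(\infty,\infty)}$ is of case $(4')$.
   Context: $E_{(-b,a)}^{(\infty,\infty)}$ is the $\mathbb{Z}$-grading on the Grassmann algebra of an infinite-dimensional space with basis $e_1,e_2,\dots$ in which the basis is split into two infinite sets whose elements have degrees $-b$ and $a$ respectively (monomials get the sum of degrees). It is said to be of case $(4')$ when the minimal sums $\alpha+\beta$ and $\alpha'+\beta'$ defined in the claim are both odd. *)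

theory Defs
  imports Main
begin

definition is_min_sol :: "nat \<Rightarrow> nat \<Rightarrow> int \<Rightarrow> nat \<Rightarrow> nat \<Rightarrow> bool" where
  "is_min_sol a b c x y \<longleftrightarrow>
     int x * int a - int y * int b = c \<and>
     (\<forall>x' y'. int x' * int a - int y' * int b = c \<longrightarrow> x + y \<le> x' + y')"

definition case_4' :: "nat \<Rightarrow> nat \<Rightarrow> nat \<Rightarrow> nat \<Rightarrow> bool" where
  "case_4' \<alpha> \<beta> \<alpha>' \<beta>' \<longleftrightarrow> odd (\<alpha> + \<beta>) \<and> odd (\<alpha>' + \<beta>')"

end

theory Submission
  imports Defs
begin

lemma par_aux:
  fixes a b d x y :: nat
  assumes "0 < a" "d = gcd a b" "odd (a div d)" "odd (b div d)"
    and eq: "int x * int a - int y * int b = c" and c: "c = int d \<or> c = - int d"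
  shows "odd (x + y)"
proof -
  have dpos: "d > 0" using assms by simp
  obtain a' where a': "a = d * a'" using assms(2) by (metis dvdE gcd_dvd1)
  obtain b' where b': "b = d * b'" using assms(2) by (metis dvdE gcd_dvd2)
  have ad: "a div d = a'" using a' dpos by simp
  have bd: "b div d = b'" using b' dpos by simp
  have "int d * (int x * int a' - int y * int b') = int d * (if c = int d then 1 else -1)"
    using eq c dpos a' b' by (auto simp: algebra_simps)
  hence e: "int x * int a' - int y * int b' = (if c = int d then 1 else -1)"
    using dpos by simp
  have oa: "odd (int a')" "odd (int b')" using assms(3,4) ad bd by auto
  have "odd (int x * int a' - int y * int b')" using e by auto
  hence "odd (int x - int y)" using oa by auto
  hence "odd (int x + int y)"
    by (metis add_diff_cancel_left' diff_diff_eq2 even_add even_diff mult_2 odd_add)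
  thus ?thesis by (metis even_of_nat of_nat_add)
qed

theorem lemma4p12:
  fixes a b d \<alpha> \<beta> \<alpha>' \<beta>' :: nat
  assumes "0 < a" and "0 < b"
    and "d = gcd a b"
    and "odd (a div d)" and "odd (b div d)"
    and "is_min_sol a b (int d) \<alpha> \<beta>"
    and "is_min_sol a b (- int d) \<alpha>' \<beta>'"
  shows "case_4' \<alpha> \<beta> \<alpha>' \<beta>'"
  using par_aux[OF assms(1,3,4,5)] assms(6,7)
  unfolding case_4'_def is_min_sol_def by blast

end
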